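(* Let $D_1,\dots,D_n\in\mathbb{R}^{d\times m}$, $\mathbf{1}\in\mathbb{R}^m$ the all-ones vector, $\tilde{D}_i=\begin{bmatrix}D_i\\ \mathbf{1}^{\top}\end{bmatrix}$ and $\bar{D}_i=D_i-\frac{1}{m}D_i\mathbf{1}\mathbf{1}^{\top}$, and assume each $\tilde{D}_i\tilde{D}_i^{\top}$ (equivalently each $\bar{D}_i\bar{D}_i^{\top}$) is invertible. Let $\mathcal{Q}_I=\sum_{i=1}^n\tilde{D}_i^{\top}(\tilde{D}_i\tilde{D}_i^{\top})^{-1}\tilde{D}_i$ and $\mathfrak{Q}_\circ=\sum_{i=1}^n\bar{D}_i^{\top}(\bar{D}_i\bar{D}_i^{\top})^{-1}\bar{D}_i$. Then $\mathcal{Q}_I=\frac{n}{m}\mathbf{1}\mathbf{1}^{\top}+\mathfrak{Q}_\circ$. Moreover the $d$ top eigenvectors of $\mathcal{Q}_I$ excluding the vector $\mathbf{1}$ are the $d$ top eigenvectors of $\mathfrak{Q}_\circ$, so that, for a fixed diagonal $\Lambda$, the problems $$\min_{\{\tilde{A}_i\in\mathbb{R}^{d\times(d+1)}\},S}\sum_{i=1}^n\|\tilde{A}_i\tilde{D}_i-S\|_F^2\ \text{s.t.}\ SS^{\top}=\Lambda,\ S\mathbf{1}=0$$ and $$\min_{\{A_i\in\mathbb{R}^{d\times d}\},S}\sum_{i=1}^n\|A_i\bar{D}_i-S\|_F^2\ \text{s.t.}\ SS^{\top}=\Lambda$$ give the same optimal reference shape $S$.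
   Context: "The $d$ top eigenvectors" of a symmetric matrix are orthonormal eigenvectors associated with its $d$ largest eigenvalues, taken in non-increasing order of eigenvalue; "excluding $\mathbf{1}$" means the eigenvector $\mathbf{1}$ is removed before selecting them. *)

theory Defs
  imports "HOL-Analysis.Analysis"
begin

text \<open>Matrices are rendered with HOL-Analysis Cartesian types: a d x m real matrix
  is a value of type real^'m^'d (rows indexed by 'd, columns by 'm), so d = CARD('d),
  m = CARD('m). The Frobenius norm of a matrix is the Euclidean norm on this type.\<close>

definition ones :: "real^'m" where
  "ones = (\<chi> j. 1)"

definition ones_mat :: "real^'m^'m" where
  "ones_mat = (\<chi> j k. 1)"

text \<open>The augmented matrix [D; 1^T]; the extra row is indexed by None.\<close>
definition aug_mat :: "real^'m^'d \<Rightarrow> real^'m^('d option)" where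
  "aug_mat D = (\<chi> r. case r of Some k \<Rightarrow> D $ k | None \<Rightarrow> ones)"

definition centered_mat :: "real^'m^'d \<Rightarrow> real^'m^'d" where
  "centered_mat D = D - (1 / real CARD('m)) *\<^sub>R (D ** ones_mat)"

text \<open>v_0,...,v_{d-1} are "the d top eigenvectors" of Q: orthonormal eigenvectors
  for the d largest eigenvalues in non-increasing order, i.e. the first d members of an
  orthonormal eigenbasis of R^m whose eigenvalues are listed in non-increasing order.\<close>
definition top_eigvecs :: "real^'m^'m \<Rightarrow> nat \<Rightarrow> (nat \<Rightarrow> real^'m) \<Rightarrow> bool" where
  "top_eigvecs Q d v \<longleftrightarrow> d \<le> CARD('m) \<and>
     (\<exists>(u::nat \<Rightarrow> real^'m) (\<mu>::nat \<Rightarrow> real).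
        (\<forall>j<CARD('m). \<forall>k<CARD('m). u j \<bullet> u k = (if j = k then 1 else 0)) \<and>
        (\<forall>j<CARD('m). Q *v u j = \<mu> j *\<^sub>R u j) \<and>
        (\<forall>j k. j \<le> k \<and> k < CARD('m) \<longrightarrow> \<mu> k \<le> \<mu> j) \<and>
        (\<forall>k<d. v k = u k))"

text \<open>The d top eigenvectors of Q excluding the eigenvector 1: the vector 1 is an
  eigenvector of Q, it is removed from an orthonormal eigenbasis, and the d top ones are
  selected from the remaining orthonormal eigenbasis of the orthogonal complement of 1.\<close>
definition top_eigvecs_excl_ones :: "real^'m^'m \<Rightarrow> nat \<Rightarrow> (nat \<Rightarrow> real^'m) \<Rightarrow> bool" where
  "top_eigvecs_excl_ones Q d v \<longleftrightarrow> d \<le> CARD('m) - 1 \<and>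
     (\<exists>c. Q *v ones = c *\<^sub>R ones) \<and>
     (\<exists>(u::nat \<Rightarrow> real^'m) (\<mu>::nat \<Rightarrow> real).
        (\<forall>j<CARD('m) - 1. u j \<bullet> ones = 0) \<and>
        (\<forall>j<CARD('m) - 1. \<forall>k<CARD('m) - 1. u j \<bullet> u k = (if j = k then 1 else 0)) \<and>
        (\<forall>j<CARD('m) - 1. Q *v u j = \<mu> j *\<^sub>R u j) \<and>
        (\<forall>j k. j \<le> k \<and> k < CARD('m) - 1 \<longrightarrow> \<mu> k \<le> \<mu> j) \<and>
        (\<forall>k<d. v k = u k))"

definition opt_ref_shape ::
  "nat \<Rightarrow> (nat \<Rightarrow> real^'m^'c) \<Rightarrow> (real^'m^'d \<Rightarrow> bool) \<Rightarrow> real^'m^'d \<Rightarrow> bool" where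
  "opt_ref_shape n M C S \<longleftrightarrow> C S \<and>
     (\<exists>A::nat \<Rightarrow> real^'c^'d. \<forall>(A'::nat \<Rightarrow> real^'c^'d) S'. C S' \<longrightarrow>
        (\<Sum>i=1..n. (norm (A i ** M i - S))\<^sup>2) \<le> (\<Sum>i=1..n. (norm (A' i ** M i - S'))\<^sup>2))"

end

theory Submission
  imports Defs
begin


lemma minv:
  fixes A :: "real^'n^'n"
  assumes "invertible A"
  shows "A ** matrix_inv A = mat 1" "matrix_inv A ** A = mat 1"
proof -
  have "\<exists>A'. A ** A' = mat 1 \<and> A' ** A = mat 1" using assms unfolding invertible_def by blast
  then have "A ** matrix_inv A = mat 1 \<and> matrix_inv A ** A = mat 1"
    unfolding matrix_inv_def by (rule someI_ex)
  then show "A ** matrix_inv A = mat 1" "matrix_inv A ** A = mat 1" by auto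
qed

lemma nsq: "(norm (x + y))\<^sup>2 = (norm x)\<^sup>2 + 2*(x \<bullet> y) + (norm (y::'a::real_inner))\<^sup>2"
  by (simp add: power2_norm_eq_inner inner_add_left inner_add_right inner_commute)

declare transpose_matrix_vector[simp del] vector_transpose_matrix[simp del]

definition projm :: "real^'m^'k \<Rightarrow> real^'m^'m" where
  "projm X = transpose X ** matrix_inv (X ** transpose X) ** X"

lemma inner_transpose: "(transpose X *v w) \<bullet> (y::real^_) = w \<bullet> (X *v y)"
  by (simp add: transpose_matrix_vector dot_lmul_matrix)

context
  fixes X :: "real^'m^'k"
  assumes inv: "invertible (X ** transpose X)"
begin

lemma projm_apply: "projm X *v y = transpose X *v (matrix_inv (X ** transpose X) *v (X *v y))"
  unfolding projm_def by (simp only: matrix_vector_mul_assoc matrix_mul_assoc)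

lemma projm_fix: "projm X *v (transpose X *v z) = transpose X *v z"
proof -
  have "X *v (transpose X *v z) = (X ** transpose X) *v z" by (simp only: matrix_vector_mul_assoc)
  then have "matrix_inv (X ** transpose X) *v (X *v (transpose X *v z)) = z"
    by (simp add: matrix_vector_mul_assoc minv[OF inv])
  then show ?thesis by (simp only: projm_apply)
qed

lemma projm_ker: "X *v y = 0 \<Longrightarrow> projm X *v y = 0"
  by (simp add: projm_apply)

lemma X_projm: "X *v (projm X *v y) = X *v y"
proof -
  have "X *v (projm X *v y) = X *v (transpose X *v (matrix_inv (X ** transpose X) *v (X *v y)))"
    by (simp only: projm_apply)
  also have "\<dots> = (X ** transpose X) *v (matrix_inv (X ** transpose X) *v (X *v y))"
    by (rule matrix_vector_mul_assoc)
  also have "\<dots> = ((X ** transpose X) ** matrix_inv (X ** transpose X)) *v (X *v y)"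
    by (rule matrix_vector_mul_assoc)
  also have "\<dots> = X *v y" by (simp only: minv[OF inv] matrix_vector_mul_lid)
  finally show ?thesis .
qed

lemma projm_inner: "x \<bullet> (projm X *v y) = (projm X *v x) \<bullet> (projm X *v y)"
proof -
  define w where "w = matrix_inv (X ** transpose X) *v (X *v y)"
  have py: "projm X *v y = transpose X *v w" by (simp add: projm_apply w_def)
  have "x \<bullet> (projm X *v y) = (X *v x) \<bullet> w" using inner_transpose inner_commute py by metis
  also have "\<dots> = (X *v (projm X *v x)) \<bullet> w" by (simp only: X_projm)
  also have "\<dots> = (projm X *v x) \<bullet> (projm X *v y)" using inner_transpose inner_commute py by metis
  finally show ?thesis .
qed

lemma projm_sym: "x \<bullet> (projm X *v y) = y \<bullet> (projm X *v x)"
  by (metis projm_inner inner_commute)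

lemma projm_psd: "0 \<le> x \<bullet> (projm X *v x)"
  by (subst projm_inner) simp

lemma projm_eq:
  assumes "\<And>z. Q *v (transpose X *v z) = transpose X *v z"
    and "\<And>y. X *v y = 0 \<Longrightarrow> Q *v y = 0"
  shows "Q = projm X"
  unfolding matrix_eq
proof
  fix y
  define w where "w = matrix_inv (X ** transpose X) *v (X *v y)"
  have py: "projm X *v y = transpose X *v w" by (simp add: projm_apply w_def)
  have "X *v (y - transpose X *v w) = 0"
    using X_projm[of y] by (simp add: py matrix_vector_mult_diff_distrib)
  then have "Q *v (y - transpose X *v w) = 0" by (rule assms(2))
  then have "Q *v y = Q *v (transpose X *v w)" by (simp add: matrix_vector_mult_diff_distrib)
  then show "Q *v y = projm X *v y" by (simp only: assms(1) py)
qed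

lemma projm_min:
  "(norm s)\<^sup>2 - s \<bullet> (projm X *v s) \<le> (norm (transpose X *v a - s))\<^sup>2"
  "(norm (transpose X *v (matrix_inv (X ** transpose X) *v (X *v s)) - s))\<^sup>2
     = (norm s)\<^sup>2 - s \<bullet> (projm X *v s)"
proof -
  let ?P = "projm X"
  have cross: "(transpose X *v b) \<bullet> (?P *v s - s) = 0" for b
    by (simp only: inner_transpose matrix_vector_mult_diff_distrib X_projm diff_self inner_zero_right)
  have pp: "(?P *v s) \<bullet> (?P *v s) = s \<bullet> (?P *v s)" by (rule projm_inner[symmetric])
  have e2: "(norm (?P *v s - s))\<^sup>2 = (norm s)\<^sup>2 - s \<bullet> (?P *v s)"
  proof -
    have "(norm (?P *v s - s))\<^sup>2 = (?P *v s) \<bullet> (?P *v s) - (?P *v s) \<bullet> s - s \<bullet> (?P *v s) + s \<bullet> s"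
      by (simp only: power2_norm_eq_inner inner_diff_left inner_diff_right)
    also have "\<dots> = s \<bullet> s - s \<bullet> (?P *v s)"
      by (simp only: pp inner_commute[of "?P *v s" s]; simp?)
    finally show ?thesis by (simp only: power2_norm_eq_inner)
  qed
  define c where "c = matrix_inv (X ** transpose X) *v (X *v s)"
  have Ps: "?P *v s = transpose X *v c" by (simp only: projm_apply c_def)
  have dec: "transpose X *v a - s = transpose X *v (a - c) + (?P *v s - s)"
    by (simp only: Ps matrix_vector_mult_diff_distrib; simp?)
  have "(norm (transpose X *v a - s))\<^sup>2 = (norm (transpose X *v (a - c)))\<^sup>2 + (norm (?P *v s - s))\<^sup>2"
    unfolding dec nsq cross by simp
  then show "(norm s)\<^sup>2 - s \<bullet> (?P *v s) \<le> (norm (transpose X *v a - s))\<^sup>2" using e2 by simp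
  show "(norm (transpose X *v (matrix_inv (X ** transpose X) *v (X *v s)) - s))\<^sup>2
     = (norm s)\<^sup>2 - s \<bullet> (?P *v s)" using e2 by (simp only: projm_apply)
qed

end



lemma ones_nth[simp]: "ones $ j = 1"
  by (simp add: ones_def)

lemma ones_mat_mv: "ones_mat *v x = (ones \<bullet> x) *\<^sub>R ones"
  by (simp add: ones_mat_def matrix_vector_mult_def inner_vec_def vec_eq_iff)

lemma ones_ones: "ones \<bullet> (ones::real^'m) = real CARD('m)"
  by (simp add: inner_vec_def)

lemma smv: "(c *\<^sub>R A) *v x = c *\<^sub>R (A *v (x::real^_))"
  by (simp add: scaleR_matrix_vector_assoc)

lemma sum_mv: "(\<Sum>i\<in>I. A i) *v (x::real^_) = (\<Sum>i\<in>I. A i *v x)"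
  by (induct I rule: infinite_finite_induct) (simp_all add: matrix_vector_mult_add_rdistrib)

lemma centered_ones: "centered_mat (D::real^'m^'d) *v ones = 0"
proof -
  have "centered_mat D *v ones = D *v ones - (1 / real CARD('m)) *\<^sub>R (D *v (ones_mat *v ones))"
    unfolding centered_mat_def
    by (simp add: matrix_vector_mult_diff_rdistrib smv matrix_vector_mul_assoc)
  also have "\<dots> = 0" by (simp add: ones_mat_mv ones_ones matrix_vector_mult_scaleR)
  finally show ?thesis .
qed

lemma centered_mv: "centered_mat (D::real^'m^'d) *v x = D *v x - ((ones \<bullet> x) / real CARD('m)) *\<^sub>R (D *v ones)"
proof -
  have "centered_mat D *v x = D *v x - (1 / real CARD('m)) *\<^sub>R (D *v (ones_mat *v x))"
    unfolding centered_mat_def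
    by (simp add: matrix_vector_mult_diff_rdistrib smv matrix_vector_mul_assoc)
  then show ?thesis by (simp add: ones_mat_mv matrix_vector_mult_scaleR)
qed

lemma transpose_diff: "transpose (A - B) = transpose A - transpose (B::real^'a^'b)"
  by (simp add: transpose_def vec_eq_iff)

lemma transpose_ones_mat: "transpose ones_mat = ones_mat"
  by (simp add: transpose_def vec_eq_iff ones_mat_def)

lemma centered_tmv:
  "transpose (centered_mat (D::real^'m^'d)) *v y = transpose D *v y - ((ones \<bullet> (transpose D *v y)) / real CARD('m)) *\<^sub>R ones"
proof -
  have "transpose (centered_mat D) = transpose D - (1 / real CARD('m)) *\<^sub>R (ones_mat ** transpose D)"
    unfolding centered_mat_def
    by (simp only: transpose_diff transpose_scalar matrix_transpose_mul transpose_ones_mat)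
  then have "transpose (centered_mat D) *v y = transpose D *v y - (1 / real CARD('m)) *\<^sub>R (ones_mat *v (transpose D *v y))"
    by (simp add: matrix_vector_mult_diff_rdistrib smv matrix_vector_mul_assoc)
  then show ?thesis by (simp add: ones_mat_mv)
qed

lemma ones_centered_t: "ones \<bullet> (transpose (centered_mat (D::real^'m^'d)) *v y) = 0"
  by (metis inner_transpose inner_commute centered_ones inner_zero_right)

lemma aug_mv: "aug_mat D *v x = (\<chi> r. case r of Some k \<Rightarrow> (D *v x) $ k | None \<Rightarrow> ones \<bullet> x)"
  by (simp add: vec_eq_iff aug_mat_def matrix_vector_mult_def inner_vec_def split: option.split)

lemma sum_option: "(\<Sum>r\<in>(UNIV::'a::finite option set). f r) = f None + (\<Sum>k\<in>UNIV. f (Some k))"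
proof -
  have "(\<Sum>r\<in>(UNIV::'a option set). f r) = (\<Sum>r\<in>insert None (range Some). f r)"
    by (simp only: UNIV_option_conv)
  also have "\<dots> = f None + (\<Sum>r\<in>range Some. f r)"
    by (rule sum.insert) (auto simp: finite_class.finite_UNIV finite_imageI)
  also have "(\<Sum>r\<in>range Some. f r) = (\<Sum>k\<in>UNIV. f (Some k))"
    by (simp add: sum.reindex)
  finally show ?thesis .
qed

lemma aug_tmv: "transpose (aug_mat (D::real^'m^'d::finite)) *v z
   = transpose D *v (\<chi> k. z $ Some k) + (z $ None) *\<^sub>R ones"
  by (simp add: vec_eq_iff aug_mat_def matrix_vector_mult_def transpose_def sum_option)




lemma inv_ker: "invertible (M::real^'n^'n) \<Longrightarrow> M *v x = 0 \<Longrightarrow> x = 0"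
  by (metis inj_matrix_vector_mult matrix_vector_mult_0_right injD)

lemma ker_inv: "(\<And>x. (M::real^'n^'n) *v x = 0 \<Longrightarrow> x = 0) \<Longrightarrow> invertible M"
  by (metis invertible_left_inverse matrix_left_invertible_ker)

lemma gram_ker: "(X ** transpose X) *v y = 0 \<Longrightarrow> transpose X *v (y::real^_) = 0"
proof -
  assume a: "(X ** transpose X) *v y = 0"
  have "(transpose X *v y) \<bullet> (transpose X *v y) = y \<bullet> (X *v (transpose X *v y))"
    by (rule inner_transpose)
  also have "\<dots> = 0" using a by (simp add: matrix_vector_mul_assoc)
  finally show ?thesis by simp
qed

lemma aug_t_inj:
  fixes D :: "real^'m^'d"
  assumes "invertible (aug_mat D ** transpose (aug_mat D))" "transpose (aug_mat D) *v z = 0"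
  shows "z = 0"
proof -
  have "(aug_mat D ** transpose (aug_mat D)) *v z = 0"
    using assms(2) by (simp add: matrix_vector_mul_assoc[symmetric])
  then show ?thesis using inv_ker[OF assms(1)] by blast
qed

lemma centered_inv:
  fixes D :: "real^'m^'d"
  assumes inv: "invertible (aug_mat D ** transpose (aug_mat D))"
  shows "invertible (centered_mat D ** transpose (centered_mat D))"
proof (rule ker_inv)
  fix y assume "(centered_mat D ** transpose (centered_mat D)) *v y = 0"
  then have "transpose (centered_mat D) *v y = 0" by (rule gram_ker)
  then have e: "transpose D *v y = ((ones \<bullet> (transpose D *v y)) / real CARD('m)) *\<^sub>R ones"
    by (simp add: centered_tmv)
  define z :: "real^'d option" where
    "z = (\<chi> r. case r of Some k \<Rightarrow> y $ k | None \<Rightarrow> - ((ones \<bullet> (transpose D *v y)) / real CARD('m)))"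
  have "(\<chi> k. z $ Some k) = y" by (simp add: z_def vec_eq_iff)
  then have "transpose (aug_mat D) *v z = 0"
    by (simp add: aug_tmv) (subst e, simp add: z_def)
  then have "z = 0" using aug_t_inj[OF inv] by blast
  then show "y = 0" by (simp add: z_def vec_eq_iff) (metis option.simps(5) vec_lambda_beta zero_index)
qed

lemma part1_single:
  fixes D :: "real^'m^'d"
  assumes inv: "invertible (aug_mat D ** transpose (aug_mat D))"
  shows "projm (aug_mat D) = (1 / real CARD('m)) *\<^sub>R ones_mat + projm (centered_mat D)"
proof -
  let ?C = "centered_mat D"
  let ?Q = "(1 / real CARD('m)) *\<^sub>R ones_mat + projm ?C"
  have invc: "invertible (?C ** transpose ?C)" by (rule centered_inv[OF inv])
  have Qv: "?Q *v x = ((ones \<bullet> x) / real CARD('m)) *\<^sub>R ones + projm ?C *v x" for x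
    by (simp add: matrix_vector_mult_add_rdistrib smv ones_mat_mv)
  have Qones: "?Q *v ones = ones"
    by (simp add: Qv ones_ones projm_ker[OF invc centered_ones])
  have QC: "?Q *v (transpose ?C *v w) = transpose ?C *v w" for w
    by (simp add: Qv ones_centered_t projm_fix[OF invc])
  have QD: "?Q *v (transpose D *v w) = transpose D *v w" for w
  proof -
    define \<beta> where "\<beta> = (ones \<bullet> (transpose D *v w)) / real CARD('m)"
    have "transpose D *v w = transpose ?C *v w + \<beta> *\<^sub>R ones"
      by (simp add: centered_tmv \<beta>_def)
    then show ?thesis
      by (simp add: matrix_vector_right_distrib matrix_vector_mult_scaleR QC Qones)
  qed
  show ?thesis
  proof (rule projm_eq[OF inv, symmetric])
    fix z
    show "?Q *v (transpose (aug_mat D) *v z) = transpose (aug_mat D) *v z"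
      by (simp add: aug_tmv matrix_vector_right_distrib matrix_vector_mult_scaleR QD Qones)
  next
    fix y assume "aug_mat D *v y = 0"
    then have a: "D *v y = 0" "ones \<bullet> y = 0"
      by (auto simp: aug_mv vec_eq_iff split: option.splits dest: spec[of _ None] spec[of _ "Some _"])
    have "?C *v y = 0" by (simp add: centered_mv a)
    then show "?Q *v y = 0" by (simp add: Qv a projm_ker[OF invc])
  qed
qed




definition energy :: "real^'m^'m \<Rightarrow> real^'m^'d \<Rightarrow> real" where
  "energy Q S = (\<Sum>k\<in>UNIV. S $ k \<bullet> (Q *v S $ k))"

lemma row_mult: "((A::real^_^_) ** X) $ k = transpose X *v (A $ k)"
  by (simp add: vec_eq_iff matrix_matrix_mult_def matrix_vector_mult_def transpose_def mult.commute[of "A $ k $ _"])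

lemma norm_sq_mat: "(norm (M::real^'a^'b))\<^sup>2 = (\<Sum>k\<in>UNIV. (norm (M $ k))\<^sup>2)"
  by (simp add: power2_norm_eq_inner inner_vec_def)

lemma energy_sum: "energy (\<Sum>i\<in>I. Q i) S = (\<Sum>i\<in>I. energy (Q i) S)"
  unfolding energy_def sum_mv inner_sum_right by (rule sum.swap)

lemma energy_add: "energy (Q1 + Q2) S = energy Q1 S + energy Q2 S"
  unfolding energy_def by (simp add: matrix_vector_mult_add_rdistrib inner_add_right sum.distrib)

lemma energy_scale: "energy (c *\<^sub>R Q) S = c * energy Q S"
  unfolding energy_def by (simp add: smv sum_distrib_left)

lemma low_one:
  assumes inv: "invertible (X ** transpose X)"
  shows "(norm S)\<^sup>2 - energy (projm X) S \<le> (norm (A ** X - S))\<^sup>2"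
    "(norm ((\<chi> k. matrix_inv (X ** transpose X) *v (X *v S $ k)) ** X - S))\<^sup>2 = (norm S)\<^sup>2 - energy (projm X) S"
proof -
  have "(norm S)\<^sup>2 - energy (projm X) S = (\<Sum>k\<in>UNIV. (norm (S $ k))\<^sup>2 - S $ k \<bullet> (projm X *v S $ k))"
    by (simp add: norm_sq_mat energy_def sum_subtractf)
  also have "\<dots> \<le> (\<Sum>k\<in>UNIV. (norm (transpose X *v (A $ k) - S $ k))\<^sup>2)"
    by (rule sum_mono) (rule projm_min(1)[OF inv])
  also have "\<dots> = (norm (A ** X - S))\<^sup>2"
    by (simp add: norm_sq_mat row_mult)
  finally show "(norm S)\<^sup>2 - energy (projm X) S \<le> (norm (A ** X - S))\<^sup>2" .
  have "(norm ((\<chi> k. matrix_inv (X ** transpose X) *v (X *v S $ k)) ** X - S))\<^sup>2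
     = (\<Sum>k\<in>UNIV. (norm (transpose X *v (matrix_inv (X ** transpose X) *v (X *v S $ k)) - S $ k))\<^sup>2)"
    by (simp add: norm_sq_mat row_mult)
  also have "\<dots> = (\<Sum>k\<in>UNIV. (norm (S $ k))\<^sup>2 - S $ k \<bullet> (projm X *v S $ k))"
    by (rule sum.cong[OF refl]) (rule projm_min(2)[OF inv])
  also have "\<dots> = (norm S)\<^sup>2 - energy (projm X) S"
    by (simp add: norm_sq_mat energy_def sum_subtractf)
  finally show "(norm ((\<chi> k. matrix_inv (X ** transpose X) *v (X *v S $ k)) ** X - S))\<^sup>2 = (norm S)\<^sup>2 - energy (projm X) S" .
qed

lemma opt_char:
  fixes M :: "nat \<Rightarrow> real^'m^'c" and C :: "real^'m^'d \<Rightarrow> bool"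
  assumes inv: "\<forall>i\<in>{1..n}. invertible (M i ** transpose (M i))"
    and nc: "\<And>S. C S \<Longrightarrow> (norm S)\<^sup>2 = K"
  shows "opt_ref_shape n M C S \<longleftrightarrow>
    C S \<and> (\<forall>S'. C S' \<longrightarrow> energy (\<Sum>i=1..n. projm (M i)) S' \<le> energy (\<Sum>i=1..n. projm (M i)) S)"
proof -
  let ?Q = "\<Sum>i=1..n. projm (M i)"
  define W where "W S = real n * (norm S)\<^sup>2 - energy ?Q S" for S :: "real^'m^'d"
  define V where "V A S = (\<Sum>i=1..n. (norm (A i ** M i - S))\<^sup>2)" for A :: "nat \<Rightarrow> real^'c^'d" and S
  define Aopt where "Aopt S = (\<lambda>i. \<chi> k. matrix_inv (M i ** transpose (M i)) *v (M i *v S $ k))" for S :: "real^'m^'d"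
  have Wsum: "W S = (\<Sum>i=1..n. (norm S)\<^sup>2 - energy (projm (M i)) S)" for S
    by (simp add: W_def energy_sum sum_subtractf)
  have low: "W S \<le> V A S" for A S
    unfolding Wsum V_def by (rule sum_mono) (rule low_one(1), use inv in auto)
  have eq: "V (Aopt S) S = W S" for S
    unfolding Wsum V_def Aopt_def by (rule sum.cong[OF refl]) (rule low_one(2), use inv in auto)
  have "opt_ref_shape n M C S \<longleftrightarrow> C S \<and> (\<exists>A. \<forall>A' S'. C S' \<longrightarrow> V A S \<le> V A' S')"
    unfolding opt_ref_shape_def V_def by simp
  also have "\<dots> \<longleftrightarrow> C S \<and> (\<forall>S'. C S' \<longrightarrow> W S \<le> W S')"
  proof safe
    fix A S' assume "C S" "\<forall>A' S'. C S' \<longrightarrow> V A S \<le> V A' S'" "C S'"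
    then have "V A S \<le> V (Aopt S') S'" by blast
    then show "W S \<le> W S'" using low[of S A] eq[of S'] by linarith
  next
    assume h: "C S" "\<forall>S'. C S' \<longrightarrow> W S \<le> W S'"
    show "\<exists>A. \<forall>A' S'. C S' \<longrightarrow> V A S \<le> V A' S'"
    proof (intro exI allI impI)
      fix A' S' assume "C S'"
      then show "V (Aopt S) S \<le> V A' S'" using h eq[of S] low[of S' A'] by force
    qed
  qed
  also have "\<dots> \<longleftrightarrow> C S \<and> (\<forall>S'. C S' \<longrightarrow> energy ?Q S' \<le> energy ?Q S)"
    using nc by (auto simp: W_def)
  finally show ?thesis .
qed




definition reflv :: "real^'m \<Rightarrow> real^'m \<Rightarrow> real^'m" where
  "reflv v x = x - (2 * (v \<bullet> x) / (v \<bullet> v)) *\<^sub>R v"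

lemma reflv_inner:
  assumes "v \<noteq> 0"
  shows "reflv v x \<bullet> reflv v y = x \<bullet> y"
proof -
  have vv: "v \<bullet> v \<noteq> 0" using assms by simp
  show ?thesis
    unfolding reflv_def inner_diff_left inner_diff_right inner_scaleR_left inner_scaleR_right
    using vv by (simp add: field_simps inner_commute)
qed

lemma gram_eq: "(A ** transpose A) = (\<chi> i j. A $ i \<bullet> (A $ j :: real^_))"
  by (simp add: matrix_matrix_mult_def transpose_def inner_vec_def vec_eq_iff)

lemma mv_nth: "((S::real^'a^'b) *v x) $ k = S $ k \<bullet> x"
  by (simp add: matrix_vector_mult_def inner_vec_def mult.commute)

lemma reflv_energy:
  fixes Q :: "real^'m^'m" and S :: "real^'m^'d"
  assumes sym: "\<And>x y. x \<bullet> (Q *v y) = y \<bullet> (Q *v x)" and v: "v \<noteq> 0"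
    and gt: "(\<Sum>k\<in>UNIV. (v \<bullet> S $ k)\<^sup>2) * (v \<bullet> (Q *v v)) > (v \<bullet> v) * (\<Sum>k\<in>UNIV. (v \<bullet> S $ k) * (v \<bullet> (Q *v S $ k)))"
  shows "energy Q (\<chi> k. reflv v (S $ k)) > energy Q S"
proof -
  define t where "t = 2 / (v \<bullet> v)"
  have vv: "v \<bullet> v > 0" using v by simp
  have t: "t > 0" using vv by (simp add: t_def)
  have row: "reflv v s \<bullet> (Q *v reflv v s) = s \<bullet> (Q *v s) - 2 * t * (v \<bullet> s) * (v \<bullet> (Q *v s)) + t\<^sup>2 * (v \<bullet> s)\<^sup>2 * (v \<bullet> (Q *v v))" for s
  proof -
    have r: "reflv v s = s - (t * (v \<bullet> s)) *\<^sub>R v" by (simp add: reflv_def t_def)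
    have "reflv v s \<bullet> (Q *v reflv v s) = s \<bullet> (Q *v s) - (t * (v \<bullet> s)) * (s \<bullet> (Q *v v)) - (t * (v \<bullet> s)) * (v \<bullet> (Q *v s)) + (t * (v \<bullet> s)) * (t * (v \<bullet> s)) * (v \<bullet> (Q *v v))"
      unfolding r by (simp add: matrix_vector_mult_diff_distrib matrix_vector_mult_scaleR inner_diff_left inner_diff_right algebra_simps)
    also have "s \<bullet> (Q *v v) = v \<bullet> (Q *v s)" by (rule sym)
    finally show ?thesis by (simp add: power2_eq_square algebra_simps)
  qed
  have "energy Q (\<chi> k. reflv v (S $ k)) - energy Q S
      = (\<Sum>k\<in>UNIV. t\<^sup>2 * (v \<bullet> S $ k)\<^sup>2 * (v \<bullet> (Q *v v)) - 2 * t * ((v \<bullet> S $ k) * (v \<bullet> (Q *v S $ k))))"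
    unfolding energy_def by (simp add: row sum_subtractf[symmetric] algebra_simps)
  also have "\<dots> = t * (t * ((\<Sum>k\<in>UNIV. (v \<bullet> S $ k)\<^sup>2) * (v \<bullet> (Q *v v))) - 2 * (\<Sum>k\<in>UNIV. (v \<bullet> S $ k) * (v \<bullet> (Q *v S $ k))))"
    by (simp add: sum_subtractf sum_distrib_left sum_distrib_right algebra_simps power2_eq_square)
  also have "\<dots> > 0"
  proof -
    have "t * ((v \<bullet> v) * (\<Sum>k\<in>UNIV. (v \<bullet> S $ k) * (v \<bullet> (Q *v S $ k)))) = 2 * (\<Sum>k\<in>UNIV. (v \<bullet> S $ k) * (v \<bullet> (Q *v S $ k)))"
      using vv by (simp add: t_def)
    moreover have "t * ((v \<bullet> v) * (\<Sum>k\<in>UNIV. (v \<bullet> S $ k) * (v \<bullet> (Q *v S $ k)))) < t * ((\<Sum>k\<in>UNIV. (v \<bullet> S $ k)\<^sup>2) * (v \<bullet> (Q *v v)))"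
      using gt t by simp
    ultimately have "2 * (\<Sum>k\<in>UNIV. (v \<bullet> S $ k) * (v \<bullet> (Q *v S $ k))) < t * ((\<Sum>k\<in>UNIV. (v \<bullet> S $ k)\<^sup>2) * (v \<bullet> (Q *v v)))"
      by linarith
    then show ?thesis using t by (simp add: mult_pos_pos)
  qed
  finally show ?thesis by simp
qed




lemma key:
  fixes Q :: "real^'m^'m" and B :: "real^'d^'m" and S :: "real^'m^'d"
  assumes sym: "\<And>x y. x \<bullet> (Q *v y) = y \<bullet> (Q *v x)"
    and Qo: "Q *v ones = 0"
    and Bpos: "\<And>y. y \<noteq> 0 \<Longrightarrow> (B *v y) \<bullet> (Q *v (B *v y)) > 0"
    and Bo: "\<And>y. ones \<bullet> (B *v y) = 0"
    and Sne: "S *v ones \<noteq> 0"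
  shows "\<exists>S'. S' ** transpose S' = S ** transpose S \<and> energy Q S < energy Q S'"
proof -
  define a where "a k = S $ k \<bullet> ones" for k
  have oQ: "ones \<bullet> (Q *v x) = 0" for x using sym[of ones x] Qo by simp
  have oo: "(ones::real^'m) \<bullet> ones = real CARD('m)" by (rule ones_ones)
  have m0: "real CARD('m) > 0" by simp
  have asum: "(\<Sum>k\<in>UNIV. (a k)\<^sup>2) > 0"
  proof -
    obtain j where "(S *v ones) $ j \<noteq> 0" using Sne by (metis vec_eq_iff zero_index)
    then have "a j \<noteq> 0" by (simp add: a_def mv_nth)
    then have "0 < (a j)\<^sup>2" by simp
    also have "\<dots> \<le> (\<Sum>k\<in>UNIV. (a k)\<^sup>2)" by (rule member_le_sum) auto
    finally show ?thesis .
  qed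
  have improve: "?thesis" if v: "v \<noteq> 0"
    and gt: "(\<Sum>k\<in>UNIV. (v \<bullet> S $ k)\<^sup>2) * (v \<bullet> (Q *v v)) > (v \<bullet> v) * (\<Sum>k\<in>UNIV. (v \<bullet> S $ k) * (v \<bullet> (Q *v S $ k)))" for v
  proof (intro exI conjI)
    show "(\<chi> k. reflv v (S $ k)) ** transpose (\<chi> k. reflv v (S $ k)) = S ** transpose S"
      by (simp add: gram_eq reflv_inner[OF v])
    show "energy Q S < energy Q (\<chi> k. reflv v (S $ k))"
      by (rule reflv_energy[OF sym v gt])
  qed
  show ?thesis
  proof (cases "\<exists>y. y \<noteq> 0 \<and> (S ** B) *v y = 0")
    case True
    then obtain y where y: "y \<noteq> 0" "(S ** B) *v y = 0" by blast
    define r where "r = B *v y"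
    have Sr: "S $ k \<bullet> r = 0" for k
      using y(2) by (metis matrix_vector_mul_assoc mv_nth r_def zero_index)
    have nu: "r \<bullet> (Q *v r) > 0" unfolding r_def by (rule Bpos[OF y(1)])
    have ro: "ones \<bullet> r = 0" unfolding r_def by (rule Bo)
    define c2 where "c2 = (\<Sum>k\<in>UNIV. a k * (r \<bullet> (Q *v S $ k)))"
    define t :: real where "t = (if c2 > 0 then -1 else 1)"
    have t2: "t * t = 1" by (simp add: t_def)
    have tc: "t * c2 \<le> 0" by (simp add: t_def)
    define v where "v = ones + t *\<^sub>R r"
    have vo: "v \<bullet> ones = real CARD('m)"
      by (simp add: v_def inner_add_left oo inner_commute[of r] ro)
    then have v0: "v \<noteq> 0" using m0 by auto
    have vS: "v \<bullet> S $ k = a k" for k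
      by (simp add: v_def inner_add_left a_def inner_commute[of ones] inner_commute[of r] Sr)
    have vQv: "v \<bullet> (Q *v v) = r \<bullet> (Q *v r)"
    proof -
      have "v \<bullet> (Q *v v) = ones \<bullet> (Q *v ones) + t * (r \<bullet> (Q *v ones)) + t * (ones \<bullet> (Q *v r)) + (t * t) * (r \<bullet> (Q *v r))"
        by (simp add: v_def matrix_vector_right_distrib matrix_vector_mult_scaleR inner_add_left inner_add_right algebra_simps)
      then show ?thesis by (simp add: oQ Qo t2)
    qed
    have g: "(\<Sum>k\<in>UNIV. (v \<bullet> S $ k) * (v \<bullet> (Q *v S $ k))) = t * c2"
    proof -
      have "(v \<bullet> S $ k) * (v \<bullet> (Q *v S $ k)) = t * (a k * (r \<bullet> (Q *v S $ k)))" for k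
      proof -
        have "v \<bullet> (Q *v S $ k) = t * (r \<bullet> (Q *v S $ k))" by (simp add: v_def inner_add_left oQ)
        then show ?thesis by (simp only: vS) simp
      qed
      then show ?thesis by (simp add: c2_def sum_distrib_left)
    qed
    have vv: "v \<bullet> v \<ge> 0" by simp
    show ?thesis
    proof (rule improve[OF v0])
      have "(v \<bullet> v) * (t * c2) \<le> 0" using vv tc by (simp add: mult_nonneg_nonpos)
      also have "0 < (\<Sum>k\<in>UNIV. (a k)\<^sup>2) * (r \<bullet> (Q *v r))" using asum nu by simp
      finally show "(\<Sum>k\<in>UNIV. (v \<bullet> S $ k)\<^sup>2) * (v \<bullet> (Q *v v)) > (v \<bullet> v) * (\<Sum>k\<in>UNIV. (v \<bullet> S $ k) * (v \<bullet> (Q *v S $ k)))"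
        by (simp only: g vQv) (simp add: vS)
    qed
  next
    case False
    then have "\<forall>y. (S ** B) *v y = 0 \<longrightarrow> y = 0" by blast
    then obtain B' where "B' ** (S ** B) = mat 1" using matrix_left_invertible_ker by blast
    then have "(S ** B) ** B' = mat 1" using matrix_left_right_inverse by blast
    then have "surj ((*v) (S ** B))" using matrix_right_invertible_surjective by blast
    then obtain y where y: "(S ** B) *v y = S *v ones" by (metis surjD)
    define r where "r = B *v y"
    have Sr: "S $ k \<bullet> r = a k" for k
      using y by (metis matrix_vector_mul_assoc mv_nth r_def a_def)
    have y0: "y \<noteq> 0" using y Sne by auto
    have nu: "r \<bullet> (Q *v r) > 0" unfolding r_def by (rule Bpos[OF y0])
    have ro: "ones \<bullet> r = 0" unfolding r_def by (rule Bo)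
    have r0: "r \<noteq> 0" using nu by auto
    define c1 where "c1 = (\<Sum>k\<in>UNIV. a k * (r \<bullet> (Q *v S $ k)))"
    show ?thesis
    proof (cases "c1 \<le> 0")
      case True
      have vS: "r \<bullet> S $ k = a k" for k using Sr by (simp add: inner_commute)
      show ?thesis
      proof (rule improve[OF r0])
        have "(r \<bullet> r) * c1 \<le> 0" using True by (simp add: mult_nonneg_nonpos)
        also have "0 < (\<Sum>k\<in>UNIV. (a k)\<^sup>2) * (r \<bullet> (Q *v r))" using asum nu by simp
        finally show "(\<Sum>k\<in>UNIV. (r \<bullet> S $ k)\<^sup>2) * (r \<bullet> (Q *v r)) > (r \<bullet> r) * (\<Sum>k\<in>UNIV. (r \<bullet> S $ k) * (r \<bullet> (Q *v S $ k)))"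
          by (simp add: vS c1_def)
      qed
    next
      case False
      define v where "v = r - 2 *\<^sub>R ones"
      have vo: "v \<bullet> ones = - 2 * real CARD('m)"
        by (simp add: v_def inner_diff_left oo inner_commute[of r] ro)
      then have v0: "v \<noteq> 0" using m0 by auto
      have vS: "v \<bullet> S $ k = - a k" for k
        using Sr[of k] by (simp add: v_def inner_diff_left a_def inner_commute[of ones] inner_commute[of r])
      have vQv: "v \<bullet> (Q *v v) = r \<bullet> (Q *v r)"
        by (simp add: v_def matrix_vector_mult_diff_distrib matrix_vector_mult_scaleR inner_diff_left inner_diff_right oQ Qo)
      have g: "(\<Sum>k\<in>UNIV. (v \<bullet> S $ k) * (v \<bullet> (Q *v S $ k))) = - c1"
      proof -
        have "(v \<bullet> S $ k) * (v \<bullet> (Q *v S $ k)) = - (a k * (r \<bullet> (Q *v S $ k)))" for k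
        proof -
        have "v \<bullet> (Q *v S $ k) = r \<bullet> (Q *v S $ k)" by (simp add: v_def inner_diff_left oQ)
        then show ?thesis by (simp add: vS)
      qed
        then show ?thesis by (simp add: c1_def sum_negf)
      qed
      have vv: "v \<bullet> v \<ge> 0" by simp
      show ?thesis
      proof (rule improve[OF v0])
        have "(v \<bullet> v) * (- c1) \<le> 0" using vv False by (simp add: mult_nonneg_nonpos)
        also have "0 < (\<Sum>k\<in>UNIV. (a k)\<^sup>2) * (r \<bullet> (Q *v r))" using asum nu by simp
        finally show "(\<Sum>k\<in>UNIV. (v \<bullet> S $ k)\<^sup>2) * (v \<bullet> (Q *v v)) > (v \<bullet> v) * (\<Sum>k\<in>UNIV. (v \<bullet> S $ k) * (v \<bullet> (Q *v S $ k)))"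
          by (simp only: g vQv) (simp add: vS)
      qed
    qed
  qed
qed




lemma cont_mv: "continuous_on X (\<lambda>x. (Q::real^'m^'n) *v x)"
  by (intro linear_continuous_on matrix_vector_mul_bounded_linear)

lemma exist_max:
  fixes Q :: "real^'m^'m" and \<Lambda> :: "real^'d^'d"
  assumes ne: "\<exists>S::real^'m^'d. S ** transpose S = \<Lambda>"
  shows "\<exists>S::real^'m^'d. S ** transpose S = \<Lambda> \<and> (\<forall>S'. S' ** transpose S' = \<Lambda> \<longrightarrow> energy Q S' \<le> energy Q S)"
proof -
  define F where "F = {S::real^'m^'d. S ** transpose S = \<Lambda>}"
  have Feq: "F = {S::real^'m^'d. (\<chi> i j. S $ i \<bullet> S $ j) = \<Lambda>}"
    unfolding F_def gram_eq ..
  have cl: "closed F" unfolding Feq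
    by (intro closed_Collect_eq continuous_intros)
  have bd: "bounded F"
  proof -
    have "norm S \<le> sqrt (\<Sum>k\<in>UNIV. \<bar>\<Lambda> $ k $ k\<bar>)" if "S \<in> F" for S
    proof -
      have "S $ k \<bullet> S $ k = \<Lambda> $ k $ k" for k
        using that unfolding Feq by (auto simp: vec_eq_iff)
      then have "(norm S)\<^sup>2 = (\<Sum>k\<in>UNIV. \<Lambda> $ k $ k)"
        by (simp add: norm_sq_mat power2_norm_eq_inner)
      also have "\<dots> \<le> (\<Sum>k\<in>UNIV. \<bar>\<Lambda> $ k $ k\<bar>)" by (rule sum_mono) simp
      finally show ?thesis by (simp add: real_le_rsqrt)
    qed
    then show ?thesis unfolding bounded_iff by blast
  qed
  have cp: "compact F" using cl bd by (simp add: compact_eq_bounded_closed)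
  have cont: "continuous_on F (energy Q)"
    unfolding energy_def
    by (intro continuous_intros continuous_on_compose2[OF cont_mv[of UNIV Q]]) auto
  have "F \<noteq> {}" using ne by (auto simp: F_def)
  from continuous_attains_sup[OF cp this cont] show ?thesis by (auto simp: F_def)
qed




lemma energy_ones_mat: "S *v ones = 0 \<Longrightarrow> energy ones_mat (S::real^'m^'d) = 0"
  unfolding energy_def ones_mat_mv
  by (simp add: mv_nth[symmetric] inner_commute[of ones])

lemma part3:
  fixes D :: "nat \<Rightarrow> real^'m^'d" and n :: nat and \<Lambda> :: "real^'d^'d"
  assumes n1: "n \<ge> 1"
    and inv: "\<forall>i\<in>{1..n}. invertible (aug_mat (D i) ** transpose (aug_mat (D i)))"
  shows "{S. opt_ref_shape n (\<lambda>i. aug_mat (D i)) (\<lambda>S. S ** transpose S = \<Lambda> \<and> S *v ones = 0) S}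
       = {S. opt_ref_shape n (\<lambda>i. centered_mat (D i)) (\<lambda>S. S ** transpose S = \<Lambda>) S}"
proof -
  define Qc where "Qc = (\<Sum>i=1..n. projm (centered_mat (D i)))"
  define QI where "QI = (\<Sum>i=1..n. projm (aug_mat (D i)))"
  have invc: "\<forall>i\<in>{1..n}. invertible (centered_mat (D i) ** transpose (centered_mat (D i)))"
    using inv centered_inv by blast
  have QIeq: "QI = (\<Sum>i=1..n. (1 / real CARD('m)) *\<^sub>R ones_mat + projm (centered_mat (D i)))"
    unfolding QI_def by (rule sum.cong[OF refl]) (use inv part1_single in blast)
  have eI: "energy QI S = energy Qc S" if "S *v ones = 0" for S :: "real^'m^'d"
    unfolding QIeq Qc_def energy_sum energy_add energy_scale energy_ones_mat[OF that] by simp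
  have nc: "(norm S)\<^sup>2 = (\<Sum>k\<in>UNIV. \<Lambda> $ k $ k)" if "S ** transpose S = \<Lambda>" for S :: "real^'m^'d"
  proof -
    have "S $ k \<bullet> S $ k = \<Lambda> $ k $ k" for k
      using that unfolding gram_eq by (auto simp: vec_eq_iff)
    then show ?thesis by (simp add: norm_sq_mat power2_norm_eq_inner)
  qed
  have chI: "opt_ref_shape n (\<lambda>i. aug_mat (D i)) (\<lambda>S. S ** transpose S = \<Lambda> \<and> S *v ones = 0) S \<longleftrightarrow>
     (S ** transpose S = \<Lambda> \<and> S *v ones = 0) \<and> (\<forall>S'. (S' ** transpose S' = \<Lambda> \<and> S' *v ones = 0) \<longrightarrow> energy QI S' \<le> energy QI S)" for S
    unfolding QI_def by (rule opt_char) (use inv nc in auto)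
  have chC: "opt_ref_shape n (\<lambda>i. centered_mat (D i)) (\<lambda>S. S ** transpose S = \<Lambda>) S \<longleftrightarrow>
     S ** transpose S = \<Lambda> \<and> (\<forall>S'. S' ** transpose S' = \<Lambda> \<longrightarrow> energy Qc S' \<le> energy Qc S)" for S
    unfolding Qc_def by (rule opt_char) (use invc nc in auto)
  have sym: "x \<bullet> (Qc *v y) = y \<bullet> (Qc *v x)" for x y
    unfolding Qc_def sum_mv inner_sum_right
    by (rule sum.cong[OF refl]) (use invc projm_sym in blast)
  have Qo: "Qc *v ones = 0"
    unfolding Qc_def sum_mv by (rule sum.neutral) (use invc projm_ker centered_ones in blast)
  define B where "B = transpose (centered_mat (D 1))"
  have inv1: "invertible (centered_mat (D 1) ** transpose (centered_mat (D 1)))" using invc n1 by auto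
  have Bpos: "(B *v y) \<bullet> (Qc *v (B *v y)) > 0" if "y \<noteq> 0" for y
  proof -
    have B0: "B *v y \<noteq> 0"
    proof
      assume "B *v y = 0"
      then have "(centered_mat (D 1) ** transpose (centered_mat (D 1))) *v y = 0"
        by (simp add: B_def matrix_vector_mul_assoc[symmetric])
      then show False using inv_ker[OF inv1] that by blast
    qed
    have "(B *v y) \<bullet> (Qc *v (B *v y)) = (\<Sum>i=1..n. (B *v y) \<bullet> (projm (centered_mat (D i)) *v (B *v y)))"
      unfolding Qc_def sum_mv inner_sum_right ..
    also have "\<dots> \<ge> (B *v y) \<bullet> (projm (centered_mat (D 1)) *v (B *v y))"
      using n1 invc by (intro member_le_sum) (auto intro!: projm_psd)
    finally have "(B *v y) \<bullet> (Qc *v (B *v y)) \<ge> (B *v y) \<bullet> (B *v y)"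
      unfolding B_def projm_fix[OF inv1] .
    moreover have "(B *v y) \<bullet> (B *v y) > 0" using B0 by simp
    ultimately show ?thesis by linarith
  qed
  have Bo: "ones \<bullet> (B *v y) = 0" for y unfolding B_def by (rule ones_centered_t)
  have zero: "S *v ones = 0" if "S ** transpose S = \<Lambda>" "\<forall>S'. S' ** transpose S' = \<Lambda> \<longrightarrow> energy Qc S' \<le> energy Qc S"
    for S :: "real^'m^'d"
  proof (rule ccontr)
    assume "S *v ones \<noteq> 0"
    from key[OF sym Qo Bpos Bo this] obtain S' where "S' ** transpose S' = S ** transpose S" "energy Qc S < energy Qc S'"
      by blast
    then show False using that by force
  qed
  show ?thesis
  proof (rule set_eqI, unfold mem_Collect_eq chI chC, rule iffI)
    fix S :: "real^'m^'d"
    assume h: "(S ** transpose S = \<Lambda> \<and> S *v ones = 0) \<and> (\<forall>S'. (S' ** transpose S' = \<Lambda> \<and> S' *v ones = 0) \<longrightarrow> energy QI S' \<le> energy QI S)"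
    then have ne: "\<exists>S::real^'m^'d. S ** transpose S = \<Lambda>" by blast
    obtain S0 where S0: "S0 ** transpose S0 = \<Lambda>" "\<forall>S'. S' ** transpose S' = \<Lambda> \<longrightarrow> energy Qc S' \<le> energy Qc S0"
      using exist_max[OF ne, of Qc] by blast
    have z0: "S0 *v ones = 0" by (rule zero[OF S0])
    have "energy Qc S0 \<le> energy Qc S" using h S0(1) z0 eI by metis
    then show "S ** transpose S = \<Lambda> \<and> (\<forall>S'. S' ** transpose S' = \<Lambda> \<longrightarrow> energy Qc S' \<le> energy Qc S)"
      using h S0(2) by force
  next
    fix S :: "real^'m^'d"
    assume h: "S ** transpose S = \<Lambda> \<and> (\<forall>S'. S' ** transpose S' = \<Lambda> \<longrightarrow> energy Qc S' \<le> energy Qc S)"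
    then have z: "S *v ones = 0" using zero by blast
    show "(S ** transpose S = \<Lambda> \<and> S *v ones = 0) \<and> (\<forall>S'. (S' ** transpose S' = \<Lambda> \<and> S' *v ones = 0) \<longrightarrow> energy QI S' \<le> energy QI S)"
      using h z eI by metis
  qed
qed




lemma dimU: "dim (UNIV::(real^'n) set) = CARD('n)"
  by (metis dim_vec_eq vec_dim_card)

lemma mv_sum: "A *v (\<Sum>i\<in>I. f i) = (\<Sum>i\<in>I. A *v (f i :: real^_))"
  by (induct I rule: infinite_finite_induct) (simp_all add: matrix_vector_right_distrib)

lemma onb_expand:
  fixes u :: "nat \<Rightarrow> real^'m"
  assumes on: "\<And>j k. j < CARD('m) \<Longrightarrow> k < CARD('m) \<Longrightarrow> u j \<bullet> u k = (if j = k then 1 else 0)"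
  shows "x = (\<Sum>j<CARD('m). (x \<bullet> u j) *\<^sub>R u j)"
proof -
  let ?m = "CARD('m)"
  let ?B = "u ` {..<?m}"
  have inj: "inj_on u {..<?m}"
  proof (rule inj_onI)
    fix j k assume "j \<in> {..<?m}" "k \<in> {..<?m}" "u j = u k"
    then show "j = k" using on[of j k] on[of j j] by (auto split: if_splits)
  qed
  have po: "pairwise orthogonal ?B"
    unfolding pairwise_def orthogonal_def using on by fastforce
  have n0: "0 \<notin> ?B" using on by fastforce
  have ind: "independent ?B" by (rule pairwise_orthogonal_independent[OF po n0])
  have cB: "card ?B = ?m" using inj by (simp add: card_image)
  have sp: "UNIV \<subseteq> span ?B"
    by (rule card_ge_dim_independent) (use ind cB dimU in auto)
  define y where "y = x - (\<Sum>j<?m. (x \<bullet> u j) *\<^sub>R u j)"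
  have yo: "y \<bullet> u k = 0" if "k < ?m" for k
  proof -
    have "(\<Sum>j<?m. (x \<bullet> u j) *\<^sub>R u j) \<bullet> u k = (\<Sum>j<?m. (x \<bullet> u j) * (if j = k then 1 else 0))"
      by (simp add: inner_sum_left on that)
    also have "\<dots> = x \<bullet> u k" using that by (simp add: sum.delta' if_distrib cong: if_cong)
    finally show ?thesis by (simp add: y_def inner_diff_left)
  qed
  have "orthogonal y y"
    by (rule orthogonal_to_span[of y ?B]) (use sp yo in \<open>auto simp: orthogonal_def\<close>)
  then have "y = 0" by (simp add: orthogonal_def)
  then show ?thesis by (simp add: y_def)
qed

lemma onb_quad:
  fixes u :: "nat \<Rightarrow> real^'m" and Q :: "real^'m^'m"
  assumes on: "\<And>j k. j < CARD('m) \<Longrightarrow> k < CARD('m) \<Longrightarrow> u j \<bullet> u k = (if j = k then 1 else 0)"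
    and ev: "\<And>j. j < CARD('m) \<Longrightarrow> Q *v u j = \<mu> j *\<^sub>R u j"
  shows "x \<bullet> (Q *v x) = (\<Sum>j<CARD('m). (x \<bullet> u j)\<^sup>2 * \<mu> j)"
proof -
  have "Q *v x = Q *v (\<Sum>j<CARD('m). (x \<bullet> u j) *\<^sub>R u j)" using onb_expand[OF on, of x] by simp
  also have "\<dots> = (\<Sum>j<CARD('m). ((x \<bullet> u j) * \<mu> j) *\<^sub>R u j)"
    by (simp add: mv_sum matrix_vector_mult_scaleR ev)
  finally have "x \<bullet> (Q *v x) = (\<Sum>j<CARD('m). ((x \<bullet> u j) * \<mu> j) * (x \<bullet> u j))"
    by (simp add: inner_sum_right)
  then show ?thesis by (simp add: power2_eq_square mult_ac)
qed

lemma onb_parseval: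
  fixes u :: "nat \<Rightarrow> real^'m"
  assumes on: "\<And>j k. j < CARD('m) \<Longrightarrow> k < CARD('m) \<Longrightarrow> u j \<bullet> u k = (if j = k then 1 else 0)"
  shows "x \<bullet> x = (\<Sum>j<CARD('m). (x \<bullet> u j)\<^sup>2)"
  using onb_quad[OF on, of "mat 1" "\<lambda>_. 1" x] by simp

lemma reflv_zero: "reflv 0 x = x"
  by (simp add: reflv_def)

lemma reflv_inner_all: "reflv w x \<bullet> reflv w y = x \<bullet> y"
  by (cases "w = 0") (simp_all add: reflv_zero reflv_inner)

lemma reflv_scale: "reflv w (c *\<^sub>R x) = c *\<^sub>R reflv w x"
  by (simp add: reflv_def algebra_simps)

lemma reflv_orth: "w \<bullet> x = 0 \<Longrightarrow> reflv w x = x"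
  by (simp add: reflv_def)




lemma part2_fwd:
  fixes Qc QI :: "real^'m^'m"
  assumes sym: "\<And>x y. x \<bullet> (Qc *v y) = y \<bullet> (Qc *v x)"
    and Qo: "Qc *v ones = 0"
    and psd: "\<And>x. x \<bullet> (Qc *v x) \<ge> 0"
    and QI: "QI = c0 *\<^sub>R ones_mat + Qc"
    and h: "top_eigvecs_excl_ones QI d v"
  shows "top_eigvecs Qc d v"
proof -
  let ?m = "CARD('m)"
  from h obtain u \<mu> where d: "d \<le> ?m - 1"
    and uo: "\<forall>j<?m - 1. u j \<bullet> ones = 0"
    and on: "\<forall>j<?m - 1. \<forall>k<?m - 1. u j \<bullet> u k = (if j = k then 1 else 0)"
    and ev: "\<forall>j<?m - 1. QI *v u j = \<mu> j *\<^sub>R u j"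
    and ord: "\<forall>j k. j \<le> k \<and> k < ?m - 1 \<longrightarrow> \<mu> k \<le> \<mu> j"
    and vu: "\<forall>k<d. v k = u k"
    unfolding top_eigvecs_excl_ones_def by blast
  define e :: "real^'m" where "e = (1 / sqrt (real ?m)) *\<^sub>R ones"
  have m0: "real ?m > 0" by simp
  have ee: "e \<bullet> e = 1" using m0 by (simp add: e_def ones_ones)
  have ue: "u j \<bullet> e = 0" if "j < ?m - 1" for j using uo that by (simp add: e_def)
  have Qe: "Qc *v e = 0" by (simp add: e_def matrix_vector_mult_scaleR Qo)
  have evc: "Qc *v u j = \<mu> j *\<^sub>R u j" if "j < ?m - 1" for j
  proof -
    have o: "ones \<bullet> u j = 0" using uo that by (metis inner_commute)
    have "QI *v u j = (c0 * (ones \<bullet> u j)) *\<^sub>R ones + Qc *v u j"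
      by (simp add: QI matrix_vector_mult_add_rdistrib smv ones_mat_mv)
    then have "QI *v u j = Qc *v u j" by (simp add: o)
    then show ?thesis using ev that by simp
  qed
  have mu0: "\<mu> j \<ge> 0" if "j < ?m - 1" for j
  proof -
    have "u j \<bullet> (Qc *v u j) = \<mu> j" using evc[OF that] on that by simp
    then show ?thesis using psd[of "u j"] by simp
  qed
  define u' where "u' j = (if j < ?m - 1 then u j else e)" for j
  define \<mu>' where "\<mu>' j = (if j < ?m - 1 then \<mu> j else 0)" for j
  show ?thesis
    unfolding top_eigvecs_def
  proof (intro conjI exI[of _ u'] exI[of _ \<mu>'])
    show "d \<le> ?m" using d by simp
    show "\<forall>j<?m. \<forall>k<?m. u' j \<bullet> u' k = (if j = k then 1 else 0)"
    proof (intro allI impI)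
      fix j k assume j: "j < ?m" and k: "k < ?m"
      have eu: "e \<bullet> u i = 0" if "i < ?m - 1" for i using ue[OF that] by (metis inner_commute)
      show "u' j \<bullet> u' k = (if j = k then 1 else 0)"
      proof (cases "j < ?m - 1"; cases "k < ?m - 1")
        assume "j < ?m - 1" "k < ?m - 1" then show ?thesis using on by (simp add: u'_def)
      next
        assume "j < ?m - 1" "\<not> k < ?m - 1" then show ?thesis using ue by (simp add: u'_def)
      next
        assume "\<not> j < ?m - 1" "k < ?m - 1" then show ?thesis using eu by (simp add: u'_def)
      next
        assume "\<not> j < ?m - 1" "\<not> k < ?m - 1" then have "j = k" using j k by linarith
        then show ?thesis using ee \<open>\<not> j < ?m - 1\<close> by (simp add: u'_def)
      qed
    qed
    show "\<forall>j<?m. Qc *v u' j = \<mu>' j *\<^sub>R u' j"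
      using evc Qe by (simp add: u'_def \<mu>'_def)
    show "\<forall>j k. j \<le> k \<and> k < ?m \<longrightarrow> \<mu>' k \<le> \<mu>' j"
      using ord mu0 by (auto simp: \<mu>'_def)
    show "\<forall>k<d. v k = u' k"
      using vu d by (simp add: u'_def)
  qed
qed




lemma part2_bwd:
  fixes Qc QI :: "real^'m^'m" and B :: "real^'d^'m"
  assumes sym: "\<And>x y. x \<bullet> (Qc *v y) = y \<bullet> (Qc *v x)"
    and Qo: "Qc *v ones = 0"
    and psd: "\<And>x. x \<bullet> (Qc *v x) \<ge> 0"
    and QI: "QI = c0 *\<^sub>R ones_mat + Qc"
    and Bpos: "\<And>y. y \<noteq> 0 \<Longrightarrow> (B *v y) \<bullet> (Qc *v (B *v y)) > 0"
    and dm: "CARD('d) \<le> CARD('m) - 1"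
    and h: "top_eigvecs Qc CARD('d) v"
  shows "top_eigvecs_excl_ones QI CARD('d) v"
proof -
  let ?m = "CARD('m)"
  let ?d = "CARD('d)"
  from h obtain u' \<mu>' where
        on: "\<forall>j<?m. \<forall>k<?m. u' j \<bullet> u' k = (if j = k then 1 else 0)"
    and ev: "\<forall>j<?m. Qc *v u' j = \<mu>' j *\<^sub>R u' j"
    and ord: "\<forall>j k. j \<le> k \<and> k < ?m \<longrightarrow> \<mu>' k \<le> \<mu>' j"
    and vu: "\<forall>k<?d. v k = u' k"
    unfolding top_eigvecs_def by blast
  have on': "\<And>j k. j < ?m \<Longrightarrow> k < ?m \<Longrightarrow> u' j \<bullet> u' k = (if j = k then 1 else 0)" using on by blast
  have ev': "\<And>j. j < ?m \<Longrightarrow> Qc *v u' j = \<mu>' j *\<^sub>R u' j" using ev by blast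
  have d1: "?d \<ge> 1" by (simp add: Suc_leI)
  have m2: "?m \<ge> 2" using dm d1 by linarith
  have m0: "real ?m > 0" by simp
  have mu0: "\<mu>' j \<ge> 0" if "j < ?m" for j
  proof -
    have "u' j \<bullet> (Qc *v u' j) = \<mu>' j" using ev' on' that by simp
    then show ?thesis using psd[of "u' j"] by simp
  qed
  have mlast: "\<mu>' (?m - 1) = 0"
  proof -
    have "0 = ones \<bullet> (Qc *v ones)" by (simp add: Qo)
    also have "\<dots> = (\<Sum>j<?m. (ones \<bullet> u' j)\<^sup>2 * \<mu>' j)" by (rule onb_quad[OF on' ev'])
    also have "\<dots> \<ge> (\<Sum>j<?m. (ones \<bullet> u' j)\<^sup>2 * \<mu>' (?m - 1))"
      by (rule sum_mono) (use ord in \<open>auto intro!: mult_left_mono\<close>)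
    also have "(\<Sum>j<?m. (ones \<bullet> u' j)\<^sup>2 * \<mu>' (?m - 1)) = ((ones::real^'m) \<bullet> ones) * \<mu>' (?m - 1)"
    proof -
      have "(\<Sum>j<?m. (ones \<bullet> u' j)\<^sup>2 * \<mu>' (?m - 1)) = (\<Sum>j<?m. (ones \<bullet> u' j)\<^sup>2) * \<mu>' (?m - 1)"
        by (rule sum_distrib_right[symmetric])
      also have "(\<Sum>j<?m. ((ones::real^'m) \<bullet> u' j)\<^sup>2) = (ones::real^'m) \<bullet> ones"
        by (rule onb_parseval[OF on', symmetric])
      finally show ?thesis .
    qed
    finally have "real ?m * \<mu>' (?m - 1) \<le> 0" by (simp add: ones_ones)
    then have "\<mu>' (?m - 1) \<le> 0" using m0 by (simp add: mult_le_0_iff)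
    moreover have "\<mu>' (?m - 1) \<ge> 0" using mu0 m2 by simp
    ultimately show ?thesis by simp
  qed
  have posd: "\<mu>' (?d - 1) > 0"
  proof (rule ccontr)
    assume np: "\<not> \<mu>' (?d - 1) > 0"
    define S where "S = (\<lambda>j. transpose B *v u' j) ` {..<?d - 1}"
    have "span S \<noteq> UNIV"
    proof
      assume "span S = UNIV"
      then have "?d = dim (span S)" using dimU by metis
      also have "\<dots> = dim S" by (rule dim_span)
      also have "\<dots> \<le> card S" by (rule dim_le_card') (simp add: S_def)
      also have "\<dots> \<le> card {..<?d - 1}" unfolding S_def by (rule card_image_le) simp
      finally have c: "?d \<le> card {..<?d - 1}" .
      have "card {..<?d - 1} = ?d - 1" by simp
      then show False using c d1 by linarith
    qed
    then obtain y where y0: "y \<noteq> 0" and yS: "\<forall>x\<in>span S. y \<bullet> x = 0"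
      using span_not_UNIV_orthogonal by blast
    define x where "x = B *v y"
    have xu: "x \<bullet> u' j = 0" if "j < ?d - 1" for j
    proof -
      have "x \<bullet> u' j = y \<bullet> (transpose B *v u' j)"
        using inner_transpose[of "transpose B" y "u' j"] by (simp add: x_def)
      also have "\<dots> = 0" using yS that by (auto simp: S_def intro: span_base)
      finally show ?thesis .
    qed
    have "x \<bullet> (Qc *v x) = (\<Sum>j<?m. (x \<bullet> u' j)\<^sup>2 * \<mu>' j)" by (rule onb_quad[OF on' ev'])
    also have "\<dots> \<le> 0"
    proof (rule sum_nonpos)
      fix j assume j: "j \<in> {..<?m}"
      show "(x \<bullet> u' j)\<^sup>2 * \<mu>' j \<le> 0"
      proof (cases "j < ?d - 1")
        case True then show ?thesis by (simp add: xu)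
      next
        case False
        then have "\<mu>' j \<le> \<mu>' (?d - 1)" using ord j by auto
        then have "\<mu>' j \<le> 0" using np by simp
        then show ?thesis by (simp add: mult_nonneg_nonpos)
      qed
    qed
    finally show False using Bpos[OF y0] by (simp add: x_def)
  qed
  have pos: "\<mu>' k > 0" if "k < ?d" for k
  proof -
    have k1: "k \<le> ?d - 1" using that by linarith
    have k2: "?d - 1 < ?m" using dm m2 d1 by linarith
    have "\<mu>' (?d - 1) \<le> \<mu>' k" using ord k1 k2 by blast
    then show ?thesis using posd by simp
  qed
  have oQ: "ones \<bullet> (Qc *v x) = 0" for x using sym[of ones x] Qo by simp
  have uo_pos: "u' k \<bullet> ones = 0" if "k < ?m" "\<mu>' k \<noteq> 0" for k
  proof -
    have "ones \<bullet> (Qc *v u' k) = \<mu>' k * (ones \<bullet> u' k)" using ev' that(1) by simp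
    then show ?thesis using oQ that(2) by (simp add: inner_commute)
  qed
  define e :: "real^'m" where "e = (1 / sqrt (real ?m)) *\<^sub>R ones"
  have ee: "e \<bullet> e = 1" using m0 by (simp add: e_def ones_ones)
  have onese: "ones = sqrt (real ?m) *\<^sub>R e" using m0 by (simp add: e_def)
  have Qe: "Qc *v e = 0" by (simp add: e_def matrix_vector_mult_scaleR Qo)
  define w where "w = u' (?m - 1) - e"
  have Qw: "Qc *v w = 0"
    using ev'[of "?m - 1"] m2 by (simp add: w_def matrix_vector_mult_diff_distrib Qe mlast[simplified])
  have He: "reflv w (u' (?m - 1)) = e"
  proof (cases "w = 0")
    case True then show ?thesis by (simp add: reflv_zero w_def)
  next
    case False
    have uu: "u' (?m - 1) \<bullet> u' (?m - 1) = 1" using on' m2 by simp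
    have "w \<bullet> w = 2 * (w \<bullet> u' (?m - 1))"
      unfolding w_def using uu ee by (simp add: inner_diff_left inner_diff_right inner_commute)
    moreover have "w \<bullet> w \<noteq> 0" using False by simp
    ultimately have c: "2 * (w \<bullet> u' (?m - 1)) / (w \<bullet> w) = 1" by simp
    show ?thesis unfolding reflv_def c by (simp add: w_def)
  qed
  have QH: "Qc *v reflv w x = Qc *v x" for x
    by (simp add: reflv_def matrix_vector_mult_diff_distrib matrix_vector_mult_scaleR Qw)
  have HQ: "reflv w (Qc *v x) = Qc *v x" for x
    by (rule reflv_orth) (use sym[of w x] Qw in simp)
  define u where "u j = reflv w (u' j)" for j
  show ?thesis
    unfolding top_eigvecs_excl_ones_def
  proof (intro conjI exI[of _ u] exI[of _ \<mu>'])
    show "?d \<le> ?m - 1" by (rule dm)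
    show "\<exists>c. QI *v ones = c *\<^sub>R ones"
      by (rule exI[of _ "c0 * real ?m"]) (simp add: QI matrix_vector_mult_add_rdistrib smv ones_mat_mv ones_ones Qo)
    have ue: "u j \<bullet> e = 0" if "j < ?m - 1" for j
    proof -
      have "u j \<bullet> e = reflv w (u' j) \<bullet> reflv w (u' (?m - 1))" by (simp add: u_def He[simplified])
      also have "\<dots> = 0" using on' that by (simp add: reflv_inner_all)
      finally show ?thesis .
    qed
    show "\<forall>j<?m - 1. u j \<bullet> ones = 0"
      using ue by (simp add: onese)
    show "\<forall>j<?m - 1. \<forall>k<?m - 1. u j \<bullet> u k = (if j = k then 1 else 0)"
      using on by (simp add: u_def reflv_inner_all)
    show "\<forall>j<?m - 1. QI *v u j = \<mu>' j *\<^sub>R u j"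
    proof (intro allI impI)
      fix j assume j: "j < ?m - 1"
      have o: "ones \<bullet> u j = 0" using ue[OF j] by (simp add: onese inner_commute)
      have "QI *v u j = Qc *v u j"
        by (simp add: QI matrix_vector_mult_add_rdistrib smv ones_mat_mv o)
      also have "\<dots> = Qc *v u' j" by (simp add: u_def QH)
      also have "\<dots> = reflv w (Qc *v u' j)" by (simp add: HQ)
      also have "\<dots> = \<mu>' j *\<^sub>R u j" using ev' j by (simp add: u_def reflv_scale)
      finally show "QI *v u j = \<mu>' j *\<^sub>R u j" .
    qed
    show "\<forall>j k. j \<le> k \<and> k < ?m - 1 \<longrightarrow> \<mu>' k \<le> \<mu>' j" using ord by auto
    show "\<forall>k<?d. v k = u k"
    proof (intro allI impI)
      fix k assume k: "k < ?d"
      have km: "k < ?m" "k \<noteq> ?m - 1" using k dm by auto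
      have "u' k \<bullet> ones = 0" using uo_pos[OF km(1)] pos[OF k] by simp
      then have "e \<bullet> u' k = 0" by (simp add: e_def inner_commute)
      moreover have "u' (?m - 1) \<bullet> u' k = 0" using on' km m2 by simp
      ultimately have "w \<bullet> u' k = 0" by (simp add: w_def inner_diff_left)
      then show "v k = u k" using vu k by (simp add: u_def reflv_orth)
    qed
  qed
qed




lemma dim_bound:
  fixes D :: "real^'m^'d"
  assumes inv: "invertible (aug_mat D ** transpose (aug_mat D))"
  shows "CARD('d) \<le> CARD('m) - 1"
proof -
  let ?f = "\<lambda>z::real^'d option. transpose (aug_mat D) *v z"
  have lin: "linear ?f" by (rule matrix_vector_mul_linear)
  have inj: "inj_on ?f (span UNIV)"
  proof (rule inj_onI)
    fix x y assume "?f x = ?f y"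
    then have "?f (x - y) = 0" by (simp add: matrix_vector_mult_diff_distrib)
    then have "x - y = 0" by (rule aug_t_inj[OF inv])
    then show "x = y" by simp
  qed
  have "dim (?f ` UNIV) = dim (UNIV :: (real^'d option) set)" by (rule dim_image_eq[OF lin inj])
  also have "\<dots> = CARD('d option)" by (rule dimU)
  finally have "CARD('d option) \<le> CARD('m)" using dim_subset_UNIV_cart[of "?f ` UNIV"] by simp
  then show ?thesis by (simp add: card_option)
qed

theorem proposition3:
  fixes D :: "nat \<Rightarrow> real^'m^'d" and n :: nat and \<Lambda> :: "real^'d^'d"
  assumes "n \<ge> 1"
    and "\<forall>i\<in>{1..n}. invertible (aug_mat (D i) ** transpose (aug_mat (D i)))"
    and "\<forall>a b. a \<noteq> b \<longrightarrow> \<Lambda> $ a $ b = 0"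
  shows "(let QI = (\<Sum>i=1..n. transpose (aug_mat (D i))
                     ** matrix_inv (aug_mat (D i) ** transpose (aug_mat (D i))) ** aug_mat (D i));
              Qc = (\<Sum>i=1..n. transpose (centered_mat (D i))
                     ** matrix_inv (centered_mat (D i) ** transpose (centered_mat (D i)))
                     ** centered_mat (D i))
          in QI = (real n / real CARD('m)) *\<^sub>R ones_mat + Qc
           \<and> (\<forall>v. top_eigvecs_excl_ones QI CARD('d) v \<longleftrightarrow> top_eigvecs Qc CARD('d) v)
           \<and> {S. opt_ref_shape n (\<lambda>i. aug_mat (D i))
                   (\<lambda>S. S ** transpose S = \<Lambda> \<and> S *v ones = 0) S}
             = {S. opt_ref_shape n (\<lambda>i. centered_mat (D i))
                   (\<lambda>S. S ** transpose S = \<Lambda>) S})"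
proof -
  note n1 = assms(1) and inv = assms(2)
  define Qc where "Qc = (\<Sum>i=1..n. projm (centered_mat (D i)))"
  define QI where "QI = (\<Sum>i=1..n. projm (aug_mat (D i)))"
  have invc: "\<forall>i\<in>{1..n}. invertible (centered_mat (D i) ** transpose (centered_mat (D i)))"
    using inv centered_inv by blast
  have QIeq: "QI = (\<Sum>i=1..n. (1 / real CARD('m)) *\<^sub>R ones_mat + projm (centered_mat (D i)))"
    unfolding QI_def by (rule sum.cong[OF refl]) (use inv part1_single in blast)
  have P1: "QI = (real n / real CARD('m)) *\<^sub>R ones_mat + Qc"
  proof -
    have "(\<Sum>i=1..n. (1 / real CARD('m)) *\<^sub>R (ones_mat::real^'m^'m)) = real (card {1..n}) *\<^sub>R ((1 / real CARD('m)) *\<^sub>R ones_mat)"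
      by (rule sum_constant_scaleR)
    also have "\<dots> = (real n / real CARD('m)) *\<^sub>R ones_mat" by simp
    finally show ?thesis unfolding QIeq Qc_def sum.distrib by simp
  qed
  have sym: "x \<bullet> (Qc *v y) = y \<bullet> (Qc *v x)" for x y
    unfolding Qc_def sum_mv inner_sum_right
    by (rule sum.cong[OF refl]) (use invc projm_sym in blast)
  have Qo: "Qc *v ones = 0"
    unfolding Qc_def sum_mv by (rule sum.neutral) (use invc projm_ker centered_ones in blast)
  have psd: "x \<bullet> (Qc *v x) \<ge> 0" for x
    unfolding Qc_def sum_mv inner_sum_right
    by (rule sum_nonneg) (use invc projm_psd in blast)
  define B where "B = transpose (centered_mat (D 1))"
  have inv1: "invertible (centered_mat (D 1) ** transpose (centered_mat (D 1)))" using invc n1 by auto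
  have Bpos: "(B *v y) \<bullet> (Qc *v (B *v y)) > 0" if "y \<noteq> 0" for y
  proof -
    have B0: "B *v y \<noteq> 0"
    proof
      assume "B *v y = 0"
      then have "(centered_mat (D 1) ** transpose (centered_mat (D 1))) *v y = 0"
        by (simp add: B_def matrix_vector_mul_assoc[symmetric])
      then show False using inv_ker[OF inv1] that by blast
    qed
    have "(B *v y) \<bullet> (Qc *v (B *v y)) = (\<Sum>i=1..n. (B *v y) \<bullet> (projm (centered_mat (D i)) *v (B *v y)))"
      unfolding Qc_def sum_mv inner_sum_right ..
    also have "\<dots> \<ge> (B *v y) \<bullet> (projm (centered_mat (D 1)) *v (B *v y))"
      using n1 invc by (intro member_le_sum) (auto intro!: projm_psd)
    finally have "(B *v y) \<bullet> (Qc *v (B *v y)) \<ge> (B *v y) \<bullet> (B *v y)"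
      unfolding B_def projm_fix[OF inv1] .
    moreover have "(B *v y) \<bullet> (B *v y) > 0" using B0 by simp
    ultimately show ?thesis by linarith
  qed
  have dm: "CARD('d) \<le> CARD('m) - 1"
    using dim_bound[of "D 1"] inv n1 by auto
  have P2: "top_eigvecs_excl_ones QI CARD('d) v \<longleftrightarrow> top_eigvecs Qc CARD('d) v" for v
  proof
    assume "top_eigvecs_excl_ones QI CARD('d) v"
    then show "top_eigvecs Qc CARD('d) v" by (rule part2_fwd[OF sym Qo psd P1])
  next
    assume "top_eigvecs Qc CARD('d) v"
    then show "top_eigvecs_excl_ones QI CARD('d) v" using part2_bwd[OF sym Qo psd P1, of B] Bpos dm by blast
  qed
  have P3: "{S. opt_ref_shape n (\<lambda>i. aug_mat (D i)) (\<lambda>S. S ** transpose S = \<Lambda> \<and> S *v ones = 0) S}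
       = {S. opt_ref_shape n (\<lambda>i. centered_mat (D i)) (\<lambda>S. S ** transpose S = \<Lambda>) S}"
    by (rule part3[OF n1 inv])
  have QI': "(\<Sum>i=1..n. transpose (aug_mat (D i))
                     ** matrix_inv (aug_mat (D i) ** transpose (aug_mat (D i))) ** aug_mat (D i)) = QI"
    unfolding QI_def projm_def ..
  have Qc': "(\<Sum>i=1..n. transpose (centered_mat (D i))
                     ** matrix_inv (centered_mat (D i) ** transpose (centered_mat (D i)))
                     ** centered_mat (D i)) = Qc"
    unfolding Qc_def projm_def ..
  show ?thesis unfolding Let_def QI' Qc' using P1 P2 P3 by blast
qed


end
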